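(* Let $K$ be a commutative ring of characteristic $0$ with unit and $M$ a multiplicative $\mathbb{R}$-vector subspace of $\mathcal{H}^{>0}$. Let $F$ be an $M$-generalized power series over $K$ with generating monomials $m_0,\dots,m_k$ such that $\operatorname{lm}(F)$ is small, and let $P\in K[[T]]$. (1) $P\circ F$ is an $M$-generalized power series with generating monomials $m_0,\dots,m_k$. (2) Assume in addition that $\operatorname{supp}(F)$ is $M$-natural and the sequence $(\operatorname{lm}(F)^\nu:\nu\in\mathbb{N})$ is coinitial in $M$. Then $P\circ F$ has $M$-natural support.
   Context: $\mathcal{H}$ is the Hardy field of germs at $+\infty$ of unary functions definable in $\mathbb{R}_{\mathrm{an},\exp}$, totally ordered by eventual comparison; a germ is small if it tends to $0$. A generalized power series over $K$ in $X=(X_0,\dots,X_k)$ is $\sum_{\alpha\in[0,\infty)^{k+1}}a_\alpha X^\alpha$ with support in a product of well-ordered subsets of $\mathbb{R}$; these form a ring $K[[X^*]]$; the support is natural if for each $a>0$ and each $i$, $[0,a)\cap\Pi_i(\operatorname{supp}G)$ is finite. An $M$-generalized power series with generating monomials $m_0,\dots,m_k$ (small elements of $M$) is a series $G(m)=\sum_{n\in M}\big(\sum_{\alpha\in\operatorname{supp}G,\,m^\alpha=n}a_\alpha\big)n$ in the ring $K((M))$ of formal series with anti-well-ordered support, for some $G\in K[[X^*]]$ with natural support; $\operatorname{lm}$ denotes the largest support element. Composition: if $P=\sum_\nu a_\nu T^\nu$ and $F=G(m)$ with $G$ of natural support, then since $\operatorname{lm}(F)$ is small, $G$ has positive order, the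 sum $P\circ G:=\sum_\nu a_\nu G^\nu$ is a well-defined element of $K[[X^*]]$, and $P\circ F:=(P\circ G)(m)$; this does not depend on the choice of $G$. A subset $S\subseteq M$ is $M$-natural if $S\cap(a,+\infty)$ is finite for all $a\in M$; coinitial in $M$ means that for every $m\in M$ some term of the sequence is $\le m$. *)

theory Defs
  imports Complex_Main "HOL-Computational_Algebra.Formal_Power_Series"
begin

definition germ_eq :: "(real \<Rightarrow> real) \<Rightarrow> (real \<Rightarrow> real) \<Rightarrow> bool" where
  "germ_eq f g \<longleftrightarrow> (\<forall>\<^sub>F x in at_top. f x = g x)"

quotient_type germ = "real \<Rightarrow> real" / germ_eq
proof (rule equivpI)
  show "reflp germ_eq" by (simp add: reflp_def germ_eq_def)
  show "symp germ_eq" by (auto simp: symp_def germ_eq_def eq_commute)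
  show "transp germ_eq" unfolding transp_def germ_eq_def
    by (auto elim: eventually_elim2)
qed

instantiation germ :: comm_monoid_mult
begin
lift_definition one_germ :: germ is "\<lambda>x. 1" .
lift_definition times_germ :: "germ \<Rightarrow> germ \<Rightarrow> germ" is "\<lambda>f g x. f x * g x"
  unfolding germ_eq_def by (auto elim: eventually_elim2)
instance
  by standard (transfer, simp add: germ_eq_def algebra_simps)+
end

lift_definition gpowr :: "germ \<Rightarrow> real \<Rightarrow> germ" is "\<lambda>f r x. f x powr r"
  unfolding germ_eq_def by (auto elim: eventually_mono)

lift_definition gless :: "germ \<Rightarrow> germ \<Rightarrow> bool" is
  "\<lambda>f g. \<forall>\<^sub>F x in at_top. f x < g x"
proof -
  fix f f' g g' :: "real \<Rightarrow> real"
  assume a: "germ_eq f f'" "germ_eq g g'"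
  have "\<forall>\<^sub>F x in at_top. f x = f' x \<and> g x = g' x"
    using a unfolding germ_eq_def by (auto intro: eventually_conj)
  then show "(\<forall>\<^sub>F x in at_top. f x < g x) = (\<forall>\<^sub>F x in at_top. f' x < g' x)"
    by (auto elim: eventually_elim2)
qed

lift_definition gle :: "germ \<Rightarrow> germ \<Rightarrow> bool" is
  "\<lambda>f g. \<forall>\<^sub>F x in at_top. f x \<le> g x"
proof -
  fix f f' g g' :: "real \<Rightarrow> real"
  assume a: "germ_eq f f'" "germ_eq g g'"
  have "\<forall>\<^sub>F x in at_top. f x = f' x \<and> g x = g' x"
    using a unfolding germ_eq_def by (auto intro: eventually_conj)
  then show "(\<forall>\<^sub>F x in at_top. f x \<le> g x) = (\<forall>\<^sub>F x in at_top. f' x \<le> g' x)"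
    by (auto elim: eventually_elim2)
qed

lift_definition gpos :: "germ \<Rightarrow> bool" is "\<lambda>f. \<forall>\<^sub>F x in at_top. f x > 0"
proof -
  fix f f' :: "real \<Rightarrow> real"
  assume a: "germ_eq f f'"
  then show "(\<forall>\<^sub>F x in at_top. f x > 0) = (\<forall>\<^sub>F x in at_top. f' x > 0)"
    unfolding germ_eq_def by (auto elim: eventually_elim2)
qed

lift_definition gsmall :: "germ \<Rightarrow> bool" is "\<lambda>f. (f \<longlongrightarrow> 0) at_top"
  unfolding germ_eq_def using tendsto_cong by blast

text \<open>M is a multiplicative R-vector subspace of the positive germs, totally ordered
  by eventual comparison (as any subset of the Hardy field H is).\<close>
definition mult_R_subspace :: "germ set \<Rightarrow> bool" where
  "mult_R_subspace M \<longleftrightarrow> M \<noteq> {} \<and> (\<forall>a\<in>M. gpos a) \<and>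
     (\<forall>a\<in>M. \<forall>b\<in>M. a * b \<in> M) \<and> (\<forall>a\<in>M. \<forall>r::real. gpowr a r \<in> M) \<and>
     (\<forall>a\<in>M. \<forall>b\<in>M. gless a b \<or> a = b \<or> gless b a)"

text \<open>Exponent vectors alpha in [0,inf)^(k+1) are encoded as functions nat => real
  vanishing outside {0..k}; a series is its coefficient function.\<close>
type_synonym 'k gser = "(nat \<Rightarrow> real) \<Rightarrow> 'k"

definition gsupp :: "'k::zero gser \<Rightarrow> (nat \<Rightarrow> real) set" where
  "gsupp G = {\<alpha>. G \<alpha> \<noteq> 0}"

definition well_ordered_set :: "real set \<Rightarrow> bool" where
  "well_ordered_set S \<longleftrightarrow> (\<forall>A. A \<subseteq> S \<and> A \<noteq> {} \<longrightarrow> (\<exists>a\<in>A. \<forall>b\<in>A. a \<le> b))"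

definition is_gps :: "nat \<Rightarrow> 'k::zero gser \<Rightarrow> bool" where
  "is_gps k G \<longleftrightarrow>
     (\<forall>\<alpha>\<in>gsupp G. (\<forall>i\<le>k. 0 \<le> \<alpha> i) \<and> (\<forall>i>k. \<alpha> i = 0)) \<and>
     (\<exists>S. (\<forall>i\<le>k. well_ordered_set (S i)) \<and> (\<forall>\<alpha>\<in>gsupp G. \<forall>i\<le>k. \<alpha> i \<in> S i))"

definition natural_support :: "nat \<Rightarrow> 'k::zero gser \<Rightarrow> bool" where
  "natural_support k G \<longleftrightarrow>
     (\<forall>a>0. \<forall>i\<le>k. finite ({0..<a} \<inter> (\<lambda>\<alpha>. \<alpha> i) ` gsupp G))"

definition gps_one :: "'k::{zero,one} gser" where
  "gps_one \<alpha> = (if \<alpha> = (\<lambda>_. 0) then 1 else 0)"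

definition gps_mult :: "'k::comm_ring_1 gser \<Rightarrow> 'k gser \<Rightarrow> 'k gser" where
  "gps_mult G H \<alpha> =
     (\<Sum>(\<beta>, \<gamma>) \<in> {(\<beta>, \<gamma>). G \<beta> \<noteq> 0 \<and> H \<gamma> \<noteq> 0 \<and> (\<lambda>i. \<beta> i + \<gamma> i) = \<alpha>}. G \<beta> * H \<gamma>)"

primrec gps_pow :: "'k::comm_ring_1 gser \<Rightarrow> nat \<Rightarrow> 'k gser" where
  "gps_pow G 0 = gps_one"
| "gps_pow G (Suc n) = gps_mult G (gps_pow G n)"

text \<open>P o G = sum_nu a_nu G^nu (coefficientwise; finitely many nonzero terms when G has
  positive order).\<close>
definition gps_comp :: "'k::comm_ring_1 fps \<Rightarrow> 'k gser \<Rightarrow> 'k gser" where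
  "gps_comp P G \<alpha> = (\<Sum>\<nu> \<in> {\<nu>. gps_pow G \<nu> \<alpha> \<noteq> 0}. fps_nth P \<nu> * gps_pow G \<nu> \<alpha>)"

definition mono_pow :: "nat \<Rightarrow> (nat \<Rightarrow> germ) \<Rightarrow> (nat \<Rightarrow> real) \<Rightarrow> germ" where
  "mono_pow k m \<alpha> = (\<Prod>i\<le>k. gpowr (m i) (\<alpha> i))"

text \<open>G(m) as element of K((M)), written as coefficient function on germs.\<close>
definition gen_eval :: "nat \<Rightarrow> 'k::comm_ring_1 gser \<Rightarrow> (nat \<Rightarrow> germ) \<Rightarrow> germ \<Rightarrow> 'k" where
  "gen_eval k G m n = (\<Sum>\<alpha> \<in> {\<alpha>. G \<alpha> \<noteq> 0 \<and> mono_pow k m \<alpha> = n}. G \<alpha>)"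

definition is_M_gps :: "germ set \<Rightarrow> nat \<Rightarrow> (nat \<Rightarrow> germ) \<Rightarrow> (germ \<Rightarrow> 'k::comm_ring_1) \<Rightarrow> bool" where
  "is_M_gps M k m F \<longleftrightarrow> (\<forall>i\<le>k. m i \<in> M \<and> gsmall (m i)) \<and>
     (\<exists>G. is_gps k G \<and> natural_support k G \<and> F = gen_eval k G m)"

definition is_lm :: "(germ \<Rightarrow> 'k::zero) \<Rightarrow> germ \<Rightarrow> bool" where
  "is_lm F l \<longleftrightarrow> F l \<noteq> 0 \<and> (\<forall>n. F n \<noteq> 0 \<longrightarrow> gle n l)"

definition M_natural :: "germ set \<Rightarrow> germ set \<Rightarrow> bool" where
  "M_natural M S \<longleftrightarrow> (\<forall>a\<in>M. finite {n\<in>S. gless a n})"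

definition coinitial_seq :: "germ set \<Rightarrow> (nat \<Rightarrow> germ) \<Rightarrow> bool" where
  "coinitial_seq M s \<longleftrightarrow> (\<forall>a\<in>M. \<exists>\<nu>. gle (s \<nu>) a)"

end

theory Submission
  imports Defs "HOL-Library.Infinite_Set"
begin


lemma gpowr_add: "gpowr a (r + s) = gpowr a r * gpowr a s"
  by transfer (simp add: germ_eq_def powr_add)

lemma gpowr_0: "gpos a \<Longrightarrow> gpowr a 0 = 1"
  by transfer (auto simp: germ_eq_def elim: eventually_mono)

lemma gpos_mult: "gpos a \<Longrightarrow> gpos b \<Longrightarrow> gpos (a * b)"
  by transfer (auto elim: eventually_elim2)

lemma gpos_gpowr: "gpos a \<Longrightarrow> gpos (gpowr a r)"
  by transfer (auto elim: eventually_mono)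

lemma gpos_1: "gpos 1"
  by transfer simp

lemma gpos_power: "gpos a \<Longrightarrow> gpos (a ^ n)"
  by (induction n) (auto intro: gpos_mult gpos_1)

lemma gcancel: "gpos x \<Longrightarrow> x = x * y \<Longrightarrow> y = 1"
  apply transfer
  apply (auto simp: germ_eq_def elim!: )
  apply (erule (1) eventually_elim2)
  by simp

lemma gsmall_one: "\<not> gsmall 1"
  apply transfer
  by (simp add: tendsto_const_iff)

lift_definition gb01 :: "germ \<Rightarrow> bool" is "\<lambda>f. \<forall>\<^sub>F x in at_top. 0 < f x \<and> f x \<le> 1"
  unfolding germ_eq_def by (auto elim: eventually_elim2)

lemma gb01_1: "gb01 1" by transfer simp

lemma gb01_mult: "gb01 a \<Longrightarrow> gb01 b \<Longrightarrow> gb01 (a * b)"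
  apply transfer
  apply (erule (1) eventually_elim2)
  by (auto simp: mult_le_one)

lemma gb01_gpos: "gb01 a \<Longrightarrow> gpos a"
  by transfer (auto elim: eventually_mono)

lemma small_ev: assumes "(f \<longlongrightarrow> (0::real)) at_top" "0 < e"
  shows "\<forall>\<^sub>F x in at_top. f x < e"
proof -
  have "\<forall>\<^sub>F x in at_top. dist (f x) 0 < e" using assms tendstoD by blast
  then show ?thesis by (auto elim: eventually_mono)
qed

lemma gb01_small: "gpos a \<Longrightarrow> gsmall a \<Longrightarrow> gb01 a"
  apply transfer
  subgoal for f
    using small_ev[of f 1]
    by (auto elim: eventually_elim2)
  done

lemma gb01_gpowr: assumes "gpos a" "gsmall a" "0 \<le> r" shows "gb01 (gpowr a r)"
  using gb01_small[OF assms(1,2)] assms(3)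
  apply transfer
  apply (auto elim!: eventually_mono)
  by (simp add: powr_le1)

lemma gsmall_gpowr: assumes "gpos a" "gsmall a" "0 < r" shows "gsmall (gpowr a r)"
  using assms apply transfer
  subgoal for f r
  proof -
    assume p: "\<forall>\<^sub>F x in at_top. 0 < f x" and s: "(f \<longlongrightarrow> 0) at_top" and r: "0 < r"
    have "((\<lambda>x. f x powr r) \<longlongrightarrow> 0 powr r) at_top"
      using s r p by (intro tendsto_powr') (auto elim: eventually_mono)
    then show ?thesis using r by simp
  qed
  done

lemma gsmall_mult_gb01: assumes "gb01 a" "gsmall b" shows "gsmall (a * b)"
  using assms apply transfer
  subgoal for f g
  proof -
    assume a: "\<forall>\<^sub>F x in at_top. 0 < f x \<and> f x \<le> 1" and s: "(g \<longlongrightarrow> 0) at_top"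
    show ?thesis
    proof (rule tendsto_0_le[OF s, where K=1])
      show "\<forall>\<^sub>F x in at_top. norm (f x * g x) \<le> norm (g x) * 1"
        using a by (auto elim!: eventually_mono simp: abs_mult mult_left_le_one_le)
    qed
  qed
  done

lemma gle_mult_gb01: "gpos a \<Longrightarrow> gb01 b \<Longrightarrow> gle (a * b) a"
  apply transfer
  apply (erule (1) eventually_elim2)
  by (simp add: mult_left_le_one_le)

lemma gle_trans: "gle a b \<Longrightarrow> gle b c \<Longrightarrow> gle a c"
  by transfer (auto elim: eventually_elim2)

lemma gle_refl: "gle a a"
  by transfer simp

lemma gless_gle_trans: "gless a b \<Longrightarrow> gle b c \<Longrightarrow> gless a c"
  by transfer (auto elim: eventually_elim2)

lemma gless_gle_False: "gless a b \<Longrightarrow> gle b a \<Longrightarrow> False"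
  apply transfer
  subgoal for a b
    using eventually_elim2[of "\<lambda>x. a x < b x" at_top "\<lambda>x. b x \<le> a x" "\<lambda>x. False"]
    by auto
  done

lemma gle_mult_mono: "gpos x \<Longrightarrow> gle x l \<Longrightarrow> gpos y \<Longrightarrow> gle y L \<Longrightarrow> gle (x * y) (l * L)"
  apply transfer
  subgoal for f g h j
  proof -
    assume a: "\<forall>\<^sub>F t in at_top. 0 < f t" "\<forall>\<^sub>F t in at_top. f t \<le> g t"
      "\<forall>\<^sub>F t in at_top. 0 < h t" "\<forall>\<^sub>F t in at_top. h t \<le> j t"
    have "\<forall>\<^sub>F t in at_top. (0 < f t \<and> f t \<le> g t) \<and> (0 < h t \<and> h t \<le> j t)"
      using a by (intro eventually_conj)
    then show ?thesis
      by (rule eventually_mono) (auto intro: mult_mono)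
  qed
  done

lemma gsmall_gle_one: "gsmall l \<Longrightarrow> gle 1 l \<Longrightarrow> False"
  apply transfer
  subgoal for l
    using small_ev[of l 1] eventually_elim2[of "\<lambda>x. l x < 1" at_top "\<lambda>x. 1 \<le> l x" "\<lambda>x. False"]
    by auto
  done

lemma mono_pow_add: "mono_pow k m (\<lambda>i. a i + b i) = mono_pow k m a * mono_pow k m b"
  unfolding mono_pow_def by (simp add: gpowr_add prod.distrib)

lemma mono_pow_zero: "(\<And>i. i \<le> k \<Longrightarrow> gpos (m i)) \<Longrightarrow> mono_pow k m (\<lambda>_. 0) = 1"
  unfolding mono_pow_def by (simp add: gpowr_0)

lemma gpos_prod: "(\<And>i. i \<in> I \<Longrightarrow> gpos (f i)) \<Longrightarrow> gpos (prod f I)"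
  by (induction I rule: infinite_finite_induct) (auto intro: gpos_mult gpos_1)

lemma gb01_prod: "(\<And>i. i \<in> I \<Longrightarrow> gb01 (f i)) \<Longrightarrow> gb01 (prod f I)"
  by (induction I rule: infinite_finite_induct) (auto intro: gb01_mult gb01_1)

lemma gpos_mono_pow: "(\<And>i. i \<le> k \<Longrightarrow> gpos (m i)) \<Longrightarrow> gpos (mono_pow k m a)"
  unfolding mono_pow_def by (auto intro!: gpos_prod gpos_gpowr)

lemma gb01_mono_pow: "(\<And>i. i \<le> k \<Longrightarrow> gpos (m i)) \<Longrightarrow> (\<And>i. i \<le> k \<Longrightarrow> gsmall (m i))
   \<Longrightarrow> (\<And>i. i \<le> k \<Longrightarrow> 0 \<le> a i) \<Longrightarrow> gb01 (mono_pow k m a)"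
  unfolding mono_pow_def by (auto intro!: gb01_prod gb01_gpowr)

lemma gsmall_mono_pow:
  assumes "\<And>i. i \<le> k \<Longrightarrow> gpos (m i)" "\<And>i. i \<le> k \<Longrightarrow> gsmall (m i)"
    "\<And>i. i \<le> k \<Longrightarrow> 0 \<le> a i" "i0 \<le> k" "0 < a i0"
  shows "gsmall (mono_pow k m a)"
proof -
  have "mono_pow k m a = (\<Prod>i\<in>{..k}-{i0}. gpowr (m i) (a i)) * gpowr (m i0) (a i0)"
    unfolding mono_pow_def using assms(4)
    by (metis (no_types, lifting) atMost_iff finite_atMost mult.commute prod.remove)
  also have "gsmall \<dots>"
    using assms by (intro gsmall_mult_gb01 gb01_prod gb01_gpowr gsmall_gpowr) auto
  finally show ?thesis .
qed



definition lsums :: "real set \<Rightarrow> real set" where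
  "lsums X = {sum_list xs | xs. set xs \<subseteq> X}"

lemma sum_list_filter_pos:
  "(\<forall>x\<in>set xs. 0 \<le> (x::real)) \<Longrightarrow> sum_list (filter (\<lambda>x. 0 < x) xs) = sum_list xs"
  by (induction xs) auto

lemma sum_list_ge_len:
  "(\<forall>x\<in>set xs. e \<le> (x::real)) \<Longrightarrow> real (length xs) * e \<le> sum_list xs"
  by (induction xs) (auto simp: algebra_simps)

lemma lsums_nonneg: "X \<subseteq> {0..} \<Longrightarrow> lsums X \<subseteq> {0..}"
  unfolding lsums_def by (auto intro!: sum_list_nonneg)

lemma lsums_fin:
  assumes X: "X \<subseteq> {0..}" and fin: "\<And>a. finite (X \<inter> {..<a})"
  shows "finite (lsums X \<inter> {..<a})"
proof (cases "X \<inter> {0<..} = {}")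
  case True
  have "lsums X \<subseteq> {0}"
  proof
    fix s assume "s \<in> lsums X"
    then obtain xs where s: "s = sum_list xs" "set xs \<subseteq> X" unfolding lsums_def by auto
    have "\<forall>x\<in>set xs. x = 0"
    proof
      fix x assume "x \<in> set xs"
      then have "x \<in> X" using s(2) by blast
      have "0 \<le> x" using X \<open>x \<in> X\<close> by auto
      moreover have "\<not> 0 < x" using True \<open>x \<in> X\<close> by auto
      ultimately show "x = 0" by simp
    qed
    then have "sum_list xs = 0" by (induction xs) auto
    then show "s \<in> {0}" using s by simp
  qed
  then have "finite (lsums X)" by (rule finite_subset) simp
  then show ?thesis by simp
next
  case False
  then obtain x0 where x0: "x0 \<in> X" "0 < x0" by auto
  define E where "E = X \<inter> {0<..} \<inter> {..<x0+1}"
  have fE: "finite E" unfolding E_def by (rule finite_subset[OF _ fin[of "x0+1"]]) auto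
  have x0E: "x0 \<in> E" using x0 unfolding E_def by auto
  define e where "e = Min E"
  have "e \<in> E" unfolding e_def using fE x0E by (intro Min_in) auto
  then have epos: "0 < e" by (auto simp: E_def)
  have ele: "e \<le> x" if "x \<in> X" "0 < x" for x
  proof (cases "x < x0 + 1")
    case True then have "x \<in> E" using that unfolding E_def by auto
    then show ?thesis unfolding e_def using fE by simp
  next
    case False
    have "e \<le> x0" unfolding e_def using fE x0E by simp
    then show ?thesis using False by simp
  qed
  define L where "L = {ys. set ys \<subseteq> X \<inter> {..<a} \<and> length ys \<le> nat \<lceil>a / e\<rceil>}"
  have fL: "finite L" unfolding L_def by (intro finite_lists_length_le fin)
  have "lsums X \<inter> {..<a} \<subseteq> sum_list ` L"
  proof
    fix s assume "s \<in> lsums X \<inter> {..<a}"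
    then obtain xs where s: "s = sum_list xs" "set xs \<subseteq> X" "s < a" unfolding lsums_def by auto
    define ys where "ys = filter (\<lambda>x. 0 < x) xs"
    have nn: "\<forall>x\<in>set xs. 0 \<le> x" using s(2) X by auto
    have sy: "sum_list ys = s" unfolding ys_def using sum_list_filter_pos[OF nn] s by simp
    have ysX: "set ys \<subseteq> X" unfolding ys_def using s(2) by auto
    have ynn: "\<forall>y\<in>set ys. 0 \<le> y" using ysX X by auto
    have "\<forall>y\<in>set ys. e \<le> y" using ysX ele unfolding ys_def by auto
    then have "real (length ys) * e \<le> s" using sum_list_ge_len sy by metis
    then have "real (length ys) * e < a" using s(3) by simp
    then have "real (length ys) < a / e" using epos by (simp add: field_simps)
    then have len: "length ys \<le> nat \<lceil>a / e\<rceil>" by linarith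
    have "\<forall>y\<in>set ys. y < a" using member_le_sum_list[of _ ys] ynn sy s(3)
      by (metis order_le_less_trans)
    then have "ys \<in> L" using ysX len unfolding L_def by auto
    then show "s \<in> sum_list ` L" using sy by auto
  qed
  then show ?thesis using fL finite_subset by blast
qed

lemma mono_subseq1:
  fixes s :: "nat \<Rightarrow> real"
  assumes fin: "\<And>a. finite (range s \<inter> {..<a})"
  shows "\<exists>g. strict_mono g \<and> incseq (\<lambda>j. s (g j))"
proof -
  obtain h where h: "strict_mono h" "monoseq (\<lambda>n. s (h n))" using seq_monosub by blast
  show ?thesis
  proof (cases "incseq (\<lambda>n. s (h n))")
    case True then show ?thesis using h by blast
  next
    case False
    then have dec: "decseq (\<lambda>n. s (h n))" using h(2) unfolding monoseq_iff by auto
    have "(\<lambda>n. s (h n)) ` UNIV \<subseteq> range s \<inter> {..<s (h 0) + 1}"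
    proof
      fix y assume "y \<in> (\<lambda>n. s (h n)) ` UNIV"
      then obtain n where y: "y = s (h n)" by auto
      have "s (h n) \<le> s (h 0)" using dec by (simp add: decseq_def)
      then show "y \<in> range s \<inter> {..<s (h 0) + 1}" using y by auto
    qed
    then have "finite ((\<lambda>n. s (h n)) ` UNIV)" using fin finite_subset by blast
    then obtain a0 where "infinite {a. s (h a) = s (h a0)}"
      using pigeonhole_infinite[of "UNIV::nat set" "\<lambda>n. s (h n)"] by auto
    define Z where "Z = {a. s (h a) = s (h a0)}"
    have Zi: "infinite Z" using \<open>infinite _\<close> Z_def by simp
    have "strict_mono (h \<circ> enumerate Z)"
      using h(1) strict_mono_enumerate[OF Zi] by (simp add: strict_mono_def)
    moreover have "\<forall>j. s (h (enumerate Z j)) = s (h a0)"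
      using enumerate_in_set[OF Zi] unfolding Z_def by auto
    then have "incseq (\<lambda>j. s ((h \<circ> enumerate Z) j))" by (simp add: incseq_def)
    ultimately show ?thesis by blast
  qed
qed

lemma mono_subseq:
  fixes f :: "nat \<Rightarrow> 'a \<Rightarrow> real"
  assumes "finite I" "\<And>i a. i \<in> I \<Longrightarrow> finite (range (\<lambda>j. f j i) \<inter> {..<a})"
  shows "\<exists>g. strict_mono g \<and> (\<forall>i\<in>I. incseq (\<lambda>j. f (g j) i))"
  using assms
proof (induction I arbitrary: f rule: finite_induct)
  case empty
  then show ?case by (rule_tac x=id in exI) (simp add: strict_mono_def)
next
  case (insert i I)
  obtain g1 where g1: "strict_mono g1" "\<forall>i\<in>I. incseq (\<lambda>j. f (g1 j) i)"
  proof -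
    have "\<exists>g. strict_mono g \<and> (\<forall>i\<in>I. incseq (\<lambda>j. f (g j) i))"
      by (rule insert.IH) (rule insert.prems, simp)
    then show ?thesis using that by blast
  qed
  have "finite (range (\<lambda>j. f (g1 j) i) \<inter> {..<a})" for a
    by (rule finite_subset[OF _ insert.prems[of i a]]) auto
  then obtain g2 where g2: "strict_mono g2" "incseq (\<lambda>j. f (g1 (g2 j)) i)"
    using mono_subseq1[of "\<lambda>j. f (g1 j) i"] by blast
  have "strict_mono (\<lambda>a. g1 (g2 a))" using g1(1) g2(1) by (simp add: strict_mono_def)
  moreover have "\<forall>i'\<in>I. incseq (\<lambda>j. f (g1 (g2 j)) i')"
    using g1(2) g2(1) by (auto simp: incseq_def strict_mono_less_eq)
  ultimately show ?case using g2(2) by blast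
qed



locale gctx =
  fixes k :: nat and m :: "nat \<Rightarrow> germ" and W :: "(nat \<Rightarrow> real) set"
  assumes m_pos: "\<And>i. i \<le> k \<Longrightarrow> gpos (m i)" and m_small: "\<And>i. i \<le> k \<Longrightarrow> gsmall (m i)"
    and W0: "(\<lambda>_. 0) \<in> W" and Wadd: "\<And>\<alpha> \<beta>. \<alpha> \<in> W \<Longrightarrow> \<beta> \<in> W \<Longrightarrow> (\<lambda>i. \<alpha> i + \<beta> i) \<in> W"
    and Wnn: "\<And>\<alpha> i. \<alpha> \<in> W \<Longrightarrow> i \<le> k \<Longrightarrow> 0 \<le> \<alpha> i"
    and Wz: "\<And>\<alpha> i. \<alpha> \<in> W \<Longrightarrow> k < i \<Longrightarrow> \<alpha> i = 0"
    and Wdisc: "\<And>i a. i \<le> k \<Longrightarrow> finite ((\<lambda>\<alpha>. \<alpha> i) ` W \<inter> {..<a})"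
begin

lemma no_rel:
  assumes a: "\<alpha> \<in> W" "\<alpha>' \<in> W" "\<forall>i\<le>k. \<alpha> i \<le> \<alpha>' i" "\<alpha> \<noteq> \<alpha>'"
    and eq0: "mono_pow k m \<alpha> = mono_pow k m \<alpha>'"
  shows False
proof -
  define \<beta> where "\<beta> = (\<lambda>i. \<alpha>' i - \<alpha> i)"
  have "\<alpha>' = (\<lambda>i. \<alpha> i + \<beta> i)" unfolding \<beta>_def by auto
  then have eq: "mono_pow k m \<alpha>' = mono_pow k m \<alpha> * mono_pow k m \<beta>" using mono_pow_add by metis
  have "mono_pow k m \<alpha> = mono_pow k m \<alpha> * mono_pow k m \<beta>" using eq eq0 by simp
  moreover have "gpos (mono_pow k m \<alpha>)" by (rule gpos_mono_pow) (rule m_pos)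
  ultimately have one: "mono_pow k m \<beta> = 1"
    using gcancel by blast
  obtain i0 where i0: "\<alpha> i0 \<noteq> \<alpha>' i0" using a(4) by auto
  have "i0 \<le> k"
  proof (rule ccontr)
    assume "\<not> i0 \<le> k"
    then have "\<alpha> i0 = 0" "\<alpha>' i0 = 0" using Wz a(1,2) by auto
    then show False using i0 by simp
  qed
  then have "0 < \<beta> i0" using a(3) i0 unfolding \<beta>_def by force
  then have "gsmall (mono_pow k m \<beta>)"
    using \<open>i0 \<le> k\<close> a(3) by (intro gsmall_mono_pow[OF m_pos m_small]) (auto simp: \<beta>_def)
  then show False using one gsmall_one by simp
qed

lemma disc_range: "i \<le> k \<Longrightarrow> range f \<subseteq> W \<Longrightarrow> finite (range (\<lambda>j. f j i) \<inter> {..<a})"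
  by (rule finite_subset[OF _ Wdisc[of i a]]) auto

lemma pair_fin: "finite {(\<beta>, \<gamma>). \<beta> \<in> W \<and> \<gamma> \<in> W \<and> mono_pow k m \<beta> * mono_pow k m \<gamma> = n}"
  (is "finite ?A")
proof (rule ccontr)
  assume "infinite ?A"
  then obtain f :: "nat \<Rightarrow> _" where f: "inj f" "range f \<subseteq> ?A"
    using iffD1[OF infinite_iff_countable_subset \<open>infinite ?A\<close>] by blast
  have fW1: "range (\<lambda>j. fst (f j)) \<subseteq> W" and fW2: "range (\<lambda>j. snd (f j)) \<subseteq> W"
    using f(2) by auto
  obtain g1 where g1: "strict_mono g1" "\<forall>i\<in>{..k}. incseq (\<lambda>j. fst (f (g1 j)) i)"
    using mono_subseq[of "{..k}" "\<lambda>j. fst (f j)"] disc_range[OF _ fW1] by auto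
  have fW3: "range (\<lambda>j. snd (f (g1 j))) \<subseteq> W" using fW2 by auto
  obtain g2 where g2: "strict_mono g2" "\<forall>i\<in>{..k}. incseq (\<lambda>j. snd (f (g1 (g2 j))) i)"
    using mono_subseq[of "{..k}" "\<lambda>j. snd (f (g1 j))"] disc_range[OF _ fW3] by auto
  define p0 where "p0 = f (g1 (g2 0))"
  define p1 where "p1 = f (g1 (g2 1))"
  have "g1 (g2 0) \<noteq> g1 (g2 1)" using g1(1) g2(1) by (simp add: strict_mono_eq)
  then have ne: "p0 \<noteq> p1" unfolding p0_def p1_def using f(1) by (meson injD)
  have "g2 0 \<le> g2 1" using g2(1) by (simp add: strict_mono_less_eq)
  then have le1: "\<forall>i\<le>k. fst p0 i \<le> fst p1 i" using g1(2) unfolding p0_def p1_def incseq_def by auto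
  have le2: "\<forall>i\<le>k. snd p0 i \<le> snd p1 i" using g2(2) unfolding p0_def p1_def incseq_def by auto
  have p0A: "p0 \<in> ?A" and p1A: "p1 \<in> ?A" unfolding p0_def p1_def using f(2) by (meson rangeI subsetD, meson rangeI subsetD)
  define a0 where "a0 = (\<lambda>i. fst p0 i + snd p0 i)"
  define a1 where "a1 = (\<lambda>i. fst p1 i + snd p1 i)"
  have a0W: "a0 \<in> W" and a1W: "a1 \<in> W" unfolding a0_def a1_def using p0A p1A Wadd by auto
  have "mono_pow k m a0 = n" "mono_pow k m a1 = n"
    unfolding a0_def a1_def mono_pow_add using p0A p1A by auto
  then have meq: "mono_pow k m a0 = mono_pow k m a1" by simp
  have le: "\<forall>i\<le>k. a0 i \<le> a1 i" unfolding a0_def a1_def using le1 le2 by (simp add: add_mono)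
  show False
  proof (cases "a0 = a1")
    case False
    then show False using no_rel[OF a0W a1W le False meq] by simp
  next
    case True
    have "fst p0 = fst p1 \<and> snd p0 = snd p1"
    proof (intro conjI ext)
      fix i
      show "fst p0 i = fst p1 i" "snd p0 i = snd p1 i"
      proof -
        have "fst p0 i = fst p1 i \<and> snd p0 i = snd p1 i"
        proof (cases "i \<le> k")
          case True
          have "fst p0 i + snd p0 i = fst p1 i + snd p1 i"
            using \<open>a0 = a1\<close> unfolding a0_def a1_def by metis
          then show ?thesis using le1 le2 True by force
        next
          case False
          then have "k < i" by simp
          have "fst p0 \<in> W" "snd p0 \<in> W" "fst p1 \<in> W" "snd p1 \<in> W" using p0A p1A by auto
          then show ?thesis using Wz[OF _ \<open>k < i\<close>] by metis
        qed
        then show "fst p0 i = fst p1 i" "snd p0 i = snd p1 i" by auto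
      qed
    qed
    then show False using ne by (simp add: prod_eq_iff)
  qed
qed

lemma fib_fin: "finite {\<alpha> \<in> W. mono_pow k m \<alpha> = n}"
proof -
  have "{\<alpha> \<in> W. mono_pow k m \<alpha> = n} \<subseteq>
        fst ` {(\<beta>, \<gamma>). \<beta> \<in> W \<and> \<gamma> \<in> W \<and> mono_pow k m \<beta> * mono_pow k m \<gamma> = n}"
  proof
    fix \<alpha> assume "\<alpha> \<in> {\<alpha> \<in> W. mono_pow k m \<alpha> = n}"
    then show "\<alpha> \<in> fst ` {(\<beta>, \<gamma>). \<beta> \<in> W \<and> \<gamma> \<in> W \<and> mono_pow k m \<beta> * mono_pow k m \<gamma> = n}"
      using W0 mono_pow_zero[OF m_pos] by (auto intro!: image_eqI[where x="(\<alpha>, \<lambda>_. 0)"])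
  qed
  then show ?thesis using pair_fin finite_subset by blast
qed

end



lemma gps_mult_nz: "gps_mult G H \<alpha> \<noteq> 0 \<Longrightarrow> \<exists>\<beta> \<gamma>. G \<beta> \<noteq> 0 \<and> H \<gamma> \<noteq> 0 \<and> \<alpha> = (\<lambda>i. \<beta> i + \<gamma> i)"
proof -
  assume "gps_mult G H \<alpha> \<noteq> 0"
  then obtain p where "p \<in> {(\<beta>, \<gamma>). G \<beta> \<noteq> 0 \<and> H \<gamma> \<noteq> 0 \<and> (\<lambda>i. \<beta> i + \<gamma> i) = \<alpha>}"
    unfolding gps_mult_def by (rule sum.not_neutral_contains_not_neutral)
  then show ?thesis by auto
qed

lemma gps_one_nz: "gps_one \<alpha> \<noteq> 0 \<Longrightarrow> \<alpha> = (\<lambda>_. 0)"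
  unfolding gps_one_def by (auto split: if_splits)

lemma gps_comp_nz: "gps_comp P G \<alpha> \<noteq> 0 \<Longrightarrow> \<exists>\<nu>. gps_pow G \<nu> \<alpha> \<noteq> 0"
proof -
  assume "gps_comp P G \<alpha> \<noteq> 0"
  then obtain \<nu> where "\<nu> \<in> {\<nu>. gps_pow G \<nu> \<alpha> \<noteq> 0}"
    unfolding gps_comp_def by (rule sum.not_neutral_contains_not_neutral)
  then show ?thesis by auto
qed

context gctx
begin

lemma supp_pow_W: "gsupp G \<subseteq> W \<Longrightarrow> gps_pow G \<nu> \<alpha> \<noteq> 0 \<Longrightarrow> \<alpha> \<in> W"
proof (induction \<nu> arbitrary: \<alpha>)
  case 0
  then show ?case using gps_one_nz W0 by auto
next
  case (Suc \<nu>)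
  then obtain \<beta> \<gamma> where b: "G \<beta> \<noteq> 0" "gps_pow G \<nu> \<gamma> \<noteq> 0" "\<alpha> = (\<lambda>i. \<beta> i + \<gamma> i)"
    using gps_mult_nz by fastforce
  have "\<beta> \<in> W" using b(1) Suc.prems(1) unfolding gsupp_def by auto
  moreover have "\<gamma> \<in> W" using Suc.IH[OF Suc.prems(1) b(2)] .
  ultimately show ?case using b(3) Wadd by simp
qed

lemma supp_comp_W: "gsupp G \<subseteq> W \<Longrightarrow> gps_comp P G \<alpha> \<noteq> 0 \<Longrightarrow> \<alpha> \<in> W"
  using gps_comp_nz supp_pow_W by blast

lemma eval_W:
  assumes "\<And>\<alpha>. H \<alpha> \<noteq> 0 \<Longrightarrow> \<alpha> \<in> W"
  shows "gen_eval k H m n = (\<Sum>\<alpha>\<in>{\<alpha>\<in>W. mono_pow k m \<alpha> = n}. H \<alpha>)"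
  unfolding gen_eval_def
  by (rule sum.mono_neutral_left[OF fib_fin]) (use assms in auto)

lemma eval_mult_nz:
  assumes GW: "\<And>\<alpha>. G \<alpha> \<noteq> 0 \<Longrightarrow> \<alpha> \<in> W" and HW: "\<And>\<alpha>. H \<alpha> \<noteq> 0 \<Longrightarrow> \<alpha> \<in> W"
    and nz: "gen_eval k (gps_mult G H) m n \<noteq> 0"
  shows "\<exists>n1 n2. n = n1 * n2 \<and> gen_eval k G m n1 \<noteq> 0 \<and> gen_eval k H m n2 \<noteq> 0"
proof -
  define FW where "FW = {\<alpha>\<in>W. mono_pow k m \<alpha> = n}"
  have fFW: "finite FW" unfolding FW_def by (rule fib_fin)
  define Q where "Q = {(\<beta>, \<gamma>). G \<beta> \<noteq> 0 \<and> H \<gamma> \<noteq> 0 \<and> mono_pow k m \<beta> * mono_pow k m \<gamma> = n}"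
  have fQ: "finite Q"
    by (rule finite_subset[OF _ pair_fin[of n]]) (auto simp: Q_def GW HW)
  define f where "f = (\<lambda>p. G (fst p) * H (snd p))"
  define g where "g = (\<lambda>p::(nat\<Rightarrow>real)\<times>(nat\<Rightarrow>real). (\<lambda>i::nat. fst p i + snd p i))"
  have GHW: "gps_mult G H \<alpha> \<noteq> 0 \<Longrightarrow> \<alpha> \<in> W" for \<alpha>
    using gps_mult_nz[of G H \<alpha>] GW HW Wadd by blast
  have "gen_eval k (gps_mult G H) m n = (\<Sum>\<alpha>\<in>FW. gps_mult G H \<alpha>)"
    unfolding FW_def by (rule eval_W) (rule GHW)
  also have "\<dots> = (\<Sum>\<alpha>\<in>FW. sum f {p \<in> Q. g p = \<alpha>})"
  proof (rule sum.cong[OF refl])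
    fix \<alpha> assume a: "\<alpha> \<in> FW"
    have "{(\<beta>, \<gamma>). G \<beta> \<noteq> 0 \<and> H \<gamma> \<noteq> 0 \<and> (\<lambda>i. \<beta> i + \<gamma> i) = \<alpha>} = {p \<in> Q. g p = \<alpha>}"
    proof (rule set_eqI)
      fix p :: "(nat\<Rightarrow>real)\<times>(nat\<Rightarrow>real)"
      obtain \<beta> \<gamma> where p: "p = (\<beta>, \<gamma>)" by (cases p)
      have "(\<lambda>i. \<beta> i + \<gamma> i) = \<alpha> \<Longrightarrow> mono_pow k m \<beta> * mono_pow k m \<gamma> = n"
        using a mono_pow_add[of k m \<beta> \<gamma>] unfolding FW_def by auto
      then show "p \<in> {(\<beta>, \<gamma>). G \<beta> \<noteq> 0 \<and> H \<gamma> \<noteq> 0 \<and> (\<lambda>i. \<beta> i + \<gamma> i) = \<alpha>} \<longleftrightarrow> p \<in> {p \<in> Q. g p = \<alpha>}"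
        unfolding p Q_def g_def by auto
    qed
    then show "gps_mult G H \<alpha> = sum f {p \<in> Q. g p = \<alpha>}"
      unfolding gps_mult_def f_def by (simp add: case_prod_beta)
  qed
  also have "\<dots> = sum f Q"
  proof (rule sum.group[OF fQ fFW])
    show "g ` Q \<subseteq> FW"
      unfolding Q_def g_def FW_def using GW HW Wadd by (auto simp: mono_pow_add)
  qed
  finally have nzQ: "sum f Q \<noteq> 0" using nz by simp
  define h where "h = (\<lambda>p. (mono_pow k m (fst p), mono_pow k m (snd p)))"
  have "sum f Q = (\<Sum>q\<in>h ` Q. sum f {p \<in> Q. h p = q})"
    by (rule sum.group[symmetric, OF fQ]) (use fQ in auto)
  then obtain q where q: "q \<in> h ` Q" "sum f {p \<in> Q. h p = q} \<noteq> 0"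
    using nzQ by (metis (no_types, lifting) sum.not_neutral_contains_not_neutral)
  obtain n1 n2 where qn: "q = (n1, n2)" by (cases q)
  have nn: "n = n1 * n2" using q(1) qn unfolding h_def Q_def by auto
  define A where "A = {\<beta>. G \<beta> \<noteq> 0 \<and> mono_pow k m \<beta> = n1}"
  define B where "B = {\<gamma>. H \<gamma> \<noteq> 0 \<and> mono_pow k m \<gamma> = n2}"
  have "{p \<in> Q. h p = q} = A \<times> B"
  proof (rule set_eqI)
    fix p :: "(nat\<Rightarrow>real)\<times>(nat\<Rightarrow>real)"
    obtain \<beta> \<gamma> where p: "p = (\<beta>, \<gamma>)" by (cases p)
    show "p \<in> {p \<in> Q. h p = q} \<longleftrightarrow> p \<in> A \<times> B"
      unfolding p A_def B_def Q_def h_def qn nn by auto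
  qed
  then have "sum f {p \<in> Q. h p = q} = (\<Sum>\<beta>\<in>A. \<Sum>\<gamma>\<in>B. G \<beta> * H \<gamma>)"
    unfolding f_def by (simp add: sum.cartesian_product case_prod_beta)
  also have "\<dots> = gen_eval k G m n1 * gen_eval k H m n2"
    unfolding gen_eval_def A_def B_def by (simp add: sum_product)
  finally have "gen_eval k G m n1 * gen_eval k H m n2 \<noteq> 0" using q(2) by simp
  then have "gen_eval k G m n1 \<noteq> 0" "gen_eval k H m n2 \<noteq> 0" by auto
  then show ?thesis using nn by blast
qed

end



context gctx
begin

lemma pow_order:
  assumes GW: "\<And>\<alpha>. G \<alpha> \<noteq> 0 \<Longrightarrow> \<alpha> \<in> W"
    and ord: "\<And>\<beta>. G \<beta> \<noteq> 0 \<Longrightarrow> e \<le> (\<Sum>i\<le>k. \<beta> i)"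
  shows "gps_pow G \<nu> \<alpha> \<noteq> 0 \<Longrightarrow> real \<nu> * e \<le> (\<Sum>i\<le>k. \<alpha> i)"
proof (induction \<nu> arbitrary: \<alpha>)
  case 0
  then have "\<alpha> = (\<lambda>_. 0)" using gps_one_nz by auto
  then show ?case by simp
next
  case (Suc \<nu>)
  then obtain \<beta> \<gamma> where b: "G \<beta> \<noteq> 0" "gps_pow G \<nu> \<gamma> \<noteq> 0" "\<alpha> = (\<lambda>i. \<beta> i + \<gamma> i)"
    using gps_mult_nz by fastforce
  have "(\<Sum>i\<le>k. \<alpha> i) = (\<Sum>i\<le>k. \<beta> i) + (\<Sum>i\<le>k. \<gamma> i)" using b(3) by (simp add: sum.distrib)
  moreover have "e \<le> (\<Sum>i\<le>k. \<beta> i)" using ord b(1) by blast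
  moreover have "real \<nu> * e \<le> (\<Sum>i\<le>k. \<gamma> i)" using Suc.IH b(2) by blast
  ultimately show ?case by (simp add: algebra_simps)
qed

lemma eval_comp_nz:
  assumes GW: "\<And>\<alpha>. G \<alpha> \<noteq> 0 \<Longrightarrow> \<alpha> \<in> W"
    and ord: "\<And>\<beta>. G \<beta> \<noteq> 0 \<Longrightarrow> e \<le> (\<Sum>i\<le>k. \<beta> i)" and e: "0 < e"
    and nz: "gen_eval k (gps_comp P G) m n \<noteq> 0"
  shows "\<exists>\<nu>. gen_eval k (gps_pow G \<nu>) m n \<noteq> 0"
proof -
  define FW where "FW = {\<alpha>\<in>W. mono_pow k m \<alpha> = n}"
  have fFW: "finite FW" unfolding FW_def by (rule fib_fin)
  define Bm where "Bm = (\<Sum>\<alpha>\<in>FW. nat \<lceil>(\<Sum>i\<le>k. \<alpha> i) / e\<rceil>)"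
  have bound: "\<nu> \<le> Bm" if a: "\<alpha> \<in> FW" "gps_pow G \<nu> \<alpha> \<noteq> 0" for \<alpha> \<nu>
  proof -
    have "real \<nu> * e \<le> (\<Sum>i\<le>k. \<alpha> i)" using pow_order[OF GW ord a(2)] by blast
    then have "real \<nu> \<le> (\<Sum>i\<le>k. \<alpha> i) / e" using e by (simp add: field_simps)
    then have "\<nu> \<le> nat \<lceil>(\<Sum>i\<le>k. \<alpha> i) / e\<rceil>" by linarith
    also have "\<dots> \<le> Bm" unfolding Bm_def by (rule member_le_sum[OF a(1) _ fFW]) simp
    finally show ?thesis .
  qed
  have powW: "gps_pow G \<nu> \<alpha> \<noteq> 0 \<Longrightarrow> \<alpha> \<in> W" for \<nu> \<alpha>
    using supp_pow_W[of G] GW unfolding gsupp_def by blast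
  have compW: "gps_comp P G \<alpha> \<noteq> 0 \<Longrightarrow> \<alpha> \<in> W" for \<alpha>
    using supp_comp_W[of G] GW unfolding gsupp_def by blast
  have "gen_eval k (gps_comp P G) m n = (\<Sum>\<alpha>\<in>FW. gps_comp P G \<alpha>)"
    unfolding FW_def by (rule eval_W) (rule compW)
  also have "\<dots> = (\<Sum>\<alpha>\<in>FW. \<Sum>\<nu>\<le>Bm. fps_nth P \<nu> * gps_pow G \<nu> \<alpha>)"
  proof (rule sum.cong[OF refl])
    fix \<alpha> assume a: "\<alpha> \<in> FW"
    show "gps_comp P G \<alpha> = (\<Sum>\<nu>\<le>Bm. fps_nth P \<nu> * gps_pow G \<nu> \<alpha>)"
      unfolding gps_comp_def
      by (rule sum.mono_neutral_left) (use bound[OF a] in auto)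
  qed
  also have "\<dots> = (\<Sum>\<nu>\<le>Bm. \<Sum>\<alpha>\<in>FW. fps_nth P \<nu> * gps_pow G \<nu> \<alpha>)"
    by (rule sum.swap)
  finally have "(\<Sum>\<nu>\<le>Bm. \<Sum>\<alpha>\<in>FW. fps_nth P \<nu> * gps_pow G \<nu> \<alpha>) \<noteq> 0" using nz by simp
  then obtain \<nu> where "(\<Sum>\<alpha>\<in>FW. fps_nth P \<nu> * gps_pow G \<nu> \<alpha>) \<noteq> 0"
    by (rule sum.not_neutral_contains_not_neutral)
  then have "fps_nth P \<nu> * (\<Sum>\<alpha>\<in>FW. gps_pow G \<nu> \<alpha>) \<noteq> 0" by (simp add: sum_distrib_left)
  then have "(\<Sum>\<alpha>\<in>FW. gps_pow G \<nu> \<alpha>) \<noteq> 0" by auto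
  moreover have "gen_eval k (gps_pow G \<nu>) m n = (\<Sum>\<alpha>\<in>FW. gps_pow G \<nu> \<alpha>)"
    unfolding FW_def by (rule eval_W) (rule powW)
  ultimately have "gen_eval k (gps_pow G \<nu>) m n \<noteq> 0" by simp
  then show ?thesis by blast
qed

lemma eval_pow_nz:
  assumes GW: "\<And>\<alpha>. G \<alpha> \<noteq> 0 \<Longrightarrow> \<alpha> \<in> W"
  shows "gen_eval k (gps_pow G \<nu>) m n \<noteq> 0 \<Longrightarrow>
    \<exists>ns. length ns = \<nu> \<and> (\<forall>x\<in>set ns. gen_eval k G m x \<noteq> 0) \<and> n = prod_list ns"
proof (induction \<nu> arbitrary: n)
  case 0
  then obtain \<alpha> where "\<alpha> \<in> {\<alpha>. gps_pow G 0 \<alpha> \<noteq> 0 \<and> mono_pow k m \<alpha> = n}"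
    unfolding gen_eval_def by (rule sum.not_neutral_contains_not_neutral) blast
  moreover have z: "mono_pow k m (\<lambda>_. 0) = 1" by (rule mono_pow_zero) (rule m_pos)
  ultimately have "n = 1" using gps_one_nz by auto
  then show ?case by auto
next
  case (Suc \<nu>)
  have powW: "gps_pow G \<nu> \<alpha> \<noteq> 0 \<Longrightarrow> \<alpha> \<in> W" for \<alpha>
    using supp_pow_W[of G] GW unfolding gsupp_def by blast
  have "\<exists>n1 n2. n = n1 * n2 \<and> gen_eval k G m n1 \<noteq> 0 \<and> gen_eval k (gps_pow G \<nu>) m n2 \<noteq> 0"
    by (rule eval_mult_nz[where G=G and H="gps_pow G \<nu>"]) (erule GW, erule powW, use Suc.prems in simp)
  then obtain n1 n2 where nn: "n = n1 * n2" "gen_eval k G m n1 \<noteq> 0" "gen_eval k (gps_pow G \<nu>) m n2 \<noteq> 0"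
    by blast
  obtain ns where ns: "length ns = \<nu>" "\<forall>x\<in>set ns. gen_eval k G m x \<noteq> 0" "n2 = prod_list ns"
    using Suc.IH[OF nn(3)] by blast
  show ?case using nn ns by (rule_tac x="n1 # ns" in exI) auto
qed

end



lemma gb01_le: "gpos x \<Longrightarrow> gle x l \<Longrightarrow> gb01 l \<Longrightarrow> gb01 x"
  apply transfer
  subgoal for f g
  proof -
    assume a: "\<forall>\<^sub>F t in at_top. 0 < f t" "\<forall>\<^sub>F t in at_top. f t \<le> g t"
      "\<forall>\<^sub>F t in at_top. 0 < g t \<and> g t \<le> 1"
    have "\<forall>\<^sub>F t in at_top. 0 < f t \<and> (f t \<le> g t \<and> (0 < g t \<and> g t \<le> 1))"
      using a by (intro eventually_conj) (auto elim: eventually_mono)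
    then show ?thesis by (rule eventually_mono) auto
  qed
  done

lemma gb01_prod_list: "(\<forall>x\<in>set ns. gb01 x) \<Longrightarrow> gb01 (prod_list ns)"
  by (induction ns) (auto intro: gb01_mult gb01_1)

lemma gle_prod_list: "(\<forall>x\<in>set ns. gb01 x) \<Longrightarrow> x \<in> set ns \<Longrightarrow> gle (prod_list ns) x"
proof (induction ns)
  case Nil then show ?case by simp
next
  case (Cons y ys)
  have py: "gb01 (prod_list ys)" using Cons.prems(1) by (intro gb01_prod_list) auto
  show ?case
  proof (cases "x = y")
    case True
    then show ?thesis using gle_mult_gb01[OF gb01_gpos py] Cons.prems(1) by auto
  next
    case False
    then have "gle (prod_list ys) x" using Cons by auto
    moreover have "gle (y * prod_list ys) (prod_list ys)"
      using gle_mult_gb01[OF gb01_gpos[OF py], of y] Cons.prems(1) by (simp add: mult.commute)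
    ultimately show ?thesis by (auto intro: gle_trans)
  qed
qed

lemma gle_prod_list_pow:
  "(\<forall>x\<in>set ns. gpos x \<and> gle x l) \<Longrightarrow> gpos l \<Longrightarrow> gle (prod_list ns) (l ^ length ns)"
proof (induction ns)
  case Nil then show ?case by (simp add: gle_refl)
next
  case (Cons y ys)
  have "gpos (prod_list ys)" using Cons.prems(1)
    by (induction ys) (auto intro: gpos_mult gpos_1)
  then show ?case using Cons by (auto intro!: gle_mult_mono)
qed

lemma gb01_power: "gb01 l \<Longrightarrow> gb01 (l ^ n)"
  by (induction n) (auto intro: gb01_mult gb01_1)

lemma gle_power_mono: "gb01 l \<Longrightarrow> \<nu>0 \<le> \<nu> \<Longrightarrow> gle (l ^ \<nu>) (l ^ \<nu>0)"
proof -
  assume l: "gb01 l" and le: "\<nu>0 \<le> \<nu>"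
  have "l ^ \<nu> = l ^ \<nu>0 * l ^ (\<nu> - \<nu>0)" using le by (simp add: power_add[symmetric])
  moreover have "gle (l ^ \<nu>0 * l ^ (\<nu> - \<nu>0)) (l ^ \<nu>0)"
    using gle_mult_gb01[OF gpos_power[OF gb01_gpos[OF l]] gb01_power[OF l]] .
  ultimately show ?thesis by simp
qed

lemma wo_of_fin: "(\<And>a. finite (S \<inter> {..<a})) \<Longrightarrow> well_ordered_set S"
  unfolding well_ordered_set_def
proof (intro allI impI)
  fix A assume fin: "\<And>a. finite (S \<inter> {..<a})" and A: "A \<subseteq> S \<and> A \<noteq> {}"
  then obtain a where a: "a \<in> A" by auto
  define B where "B = A \<inter> {..<a+1}"
  have fB: "finite B" unfolding B_def by (rule finite_subset[OF _ fin[of "a+1"]]) (use A in auto)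
  have aB: "a \<in> B" unfolding B_def using a by auto
  show "\<exists>x\<in>A. \<forall>y\<in>A. x \<le> y"
  proof (intro bexI ballI)
    fix y assume y: "y \<in> A"
    show "Min B \<le> y"
    proof (cases "y < a + 1")
      case True then have "y \<in> B" using y B_def by auto
      then show ?thesis using fB by simp
    next
      case False
      have "Min B \<le> a" using fB aB by simp
      then show ?thesis using False by simp
    qed
  next
    have "Min B \<in> B" using Min_in[OF fB] aB by auto
    then show "Min B \<in> A" unfolding B_def by simp
  qed
qed

lemma lsums_zero: "X \<subseteq> {0} \<Longrightarrow> lsums X \<subseteq> {0}"
  unfolding lsums_def
proof clarsimp
  fix xs :: "real list" assume "X \<subseteq> {0}" "set xs \<subseteq> X"
  then have "\<forall>x\<in>set xs. x = 0" by auto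
  then show "sum_list xs = 0" by (induction xs) auto
qed

lemma lsums_add: "x \<in> lsums X \<Longrightarrow> y \<in> lsums X \<Longrightarrow> x + y \<in> lsums X"
  unfolding lsums_def
proof clarsimp
  fix xs ys assume "set xs \<subseteq> X" "set ys \<subseteq> X"
  then show "\<exists>zs. sum_list xs + sum_list ys = sum_list zs \<and> set zs \<subseteq> X"
    by (rule_tac x="xs @ ys" in exI) auto
qed

lemma lsums_0: "0 \<in> lsums X"
  unfolding lsums_def by (rule CollectI, rule exI[of _ "[]"]) simp

lemma lsums_single: "x \<in> X \<Longrightarrow> x \<in> lsums X"
  unfolding lsums_def by (rule CollectI, rule exI[of _ "[x]"]) simp



theorem proposition5p9:
  fixes M :: "germ set" and k :: nat and m :: "nat \<Rightarrow> germ"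
    and F :: "germ \<Rightarrow> 'k::{comm_ring_1, ring_char_0}" and P :: "'k fps"
    and G :: "'k gser" and l :: germ
  assumes M: "mult_R_subspace M"
    and F: "is_M_gps M k m F"
    and G: "is_gps k G" "natural_support k G" "F = gen_eval k G m"
    and lm: "is_lm F l" "gsmall l"
  shows "is_M_gps M k m (gen_eval k (gps_comp P G) m) \<and>
         (M_natural M {n. F n \<noteq> 0} \<and> coinitial_seq M (\<lambda>\<nu>. l ^ \<nu>) \<longrightarrow>
          M_natural M {n. gen_eval k (gps_comp P G) m n \<noteq> 0})"
proof -
  have mM: "\<And>i. i \<le> k \<Longrightarrow> m i \<in> M" and m_small: "\<And>i. i \<le> k \<Longrightarrow> gsmall (m i)"
    using F unfolding is_M_gps_def by auto
  have m_pos: "\<And>i. i \<le> k \<Longrightarrow> gpos (m i)" using mM M unfolding mult_R_subspace_def by auto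
  define T where "T = (\<lambda>i. (\<lambda>\<alpha>. \<alpha> i) ` gsupp G)"
  define W where "W = {\<alpha>. \<forall>i. \<alpha> i \<in> lsums (T i)}"
  have Gsupp: "\<And>\<alpha>. G \<alpha> \<noteq> 0 \<Longrightarrow> (\<forall>i\<le>k. 0 \<le> \<alpha> i) \<and> (\<forall>i>k. \<alpha> i = 0)"
    using G(1) unfolding is_gps_def gsupp_def by auto
  have Tnn: "T i \<subseteq> {0..}" if "i \<le> k" for i
    using Gsupp that unfolding T_def gsupp_def by auto
  have Tz: "T i \<subseteq> {0}" if "k < i" for i
    using Gsupp that unfolding T_def gsupp_def by auto
  have Tfin: "finite (T i \<inter> {..<a})" if "i \<le> k" for i a
  proof (cases "0 < a")
    case True
    have "finite ({0..<a} \<inter> T i)" using G(2) True that unfolding natural_support_def T_def by auto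
    moreover have "T i \<inter> {..<a} = {0..<a} \<inter> T i" using Tnn[OF that] by auto
    ultimately show ?thesis by simp
  next
    case False
    then have "T i \<inter> {..<a} = {}" using Tnn[OF that] by fastforce
    then show ?thesis by simp
  qed
  have Wi: "(\<lambda>\<alpha>. \<alpha> i) ` W \<subseteq> lsums (T i)" for i unfolding W_def by auto
  interpret gctx k m W
  proof
    show "\<And>i. i \<le> k \<Longrightarrow> gpos (m i)" by (rule m_pos)
    show "\<And>i. i \<le> k \<Longrightarrow> gsmall (m i)" by (rule m_small)
    show "(\<lambda>_. 0) \<in> W" unfolding W_def using lsums_0 by auto
    show "\<And>\<alpha> \<beta>. \<alpha> \<in> W \<Longrightarrow> \<beta> \<in> W \<Longrightarrow> (\<lambda>i. \<alpha> i + \<beta> i) \<in> W"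
      unfolding W_def using lsums_add by auto
    show "0 \<le> \<alpha> i" if "\<alpha> \<in> W" "i \<le> k" for \<alpha> i
    proof -
      have "\<alpha> i \<in> lsums (T i)" using that(1) unfolding W_def by auto
      then show ?thesis using lsums_nonneg[OF Tnn[OF that(2)]] by auto
    qed
    show "\<alpha> i = 0" if "\<alpha> \<in> W" "k < i" for \<alpha> i
    proof -
      have "\<alpha> i \<in> lsums (T i)" using that(1) unfolding W_def by auto
      then show ?thesis using lsums_zero[OF Tz[OF that(2)]] by auto
    qed
    show "\<And>i a. i \<le> k \<Longrightarrow> finite ((\<lambda>\<alpha>. \<alpha> i) ` W \<inter> {..<a})"
    proof -
      fix i a assume i: "i \<le> k"
      have "finite (lsums (T i) \<inter> {..<a})" using lsums_fin[OF Tnn[OF i] Tfin[OF i]] .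
      then show "finite ((\<lambda>\<alpha>. \<alpha> i) ` W \<inter> {..<a})"
        by (rule finite_subset[rotated]) (use Wi in auto)
    qed
  qed
  have GW: "\<And>\<alpha>. G \<alpha> \<noteq> 0 \<Longrightarrow> \<alpha> \<in> W"
    unfolding W_def T_def gsupp_def using lsums_single by auto
  have compW: "\<And>\<alpha>. gps_comp P G \<alpha> \<noteq> 0 \<Longrightarrow> \<alpha> \<in> W"
    using supp_comp_W[of G] GW unfolding gsupp_def by blast
  have part1: "is_M_gps M k m (gen_eval k (gps_comp P G) m)"
    unfolding is_M_gps_def
  proof (intro conjI allI impI exI[of _ "gps_comp P G"])
    fix i assume "i \<le> k" then show "m i \<in> M" "gsmall (m i)" using mM m_small by auto
  next
    show "is_gps k (gps_comp P G)"
      unfolding is_gps_def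
    proof (intro conjI ballI allI impI exI[of _ "\<lambda>i. (\<lambda>\<alpha>. \<alpha> i) ` W"])
      fix \<alpha> i assume "\<alpha> \<in> gsupp (gps_comp P G)"
      then have "\<alpha> \<in> W" using compW unfolding gsupp_def by auto
      then show "i \<le> k \<Longrightarrow> 0 \<le> \<alpha> i" "k < i \<Longrightarrow> \<alpha> i = 0" using Wnn Wz by auto
      show "i \<le> k \<Longrightarrow> \<alpha> i \<in> (\<lambda>\<alpha>. \<alpha> i) ` W" using \<open>\<alpha> \<in> W\<close> by auto
    next
      fix i assume "i \<le> k"
      then show "well_ordered_set ((\<lambda>\<alpha>. \<alpha> i) ` W)" by (intro wo_of_fin Wdisc)
    qed
  next
    show "natural_support k (gps_comp P G)"
      unfolding natural_support_def
    proof (intro allI impI)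
      fix a :: real and i assume "0 < a" "i \<le> k"
      show "finite ({0..<a} \<inter> (\<lambda>\<alpha>. \<alpha> i) ` gsupp (gps_comp P G))"
        by (rule finite_subset[OF _ Wdisc[OF \<open>i \<le> k\<close>, of a]])
           (use compW in \<open>auto simp: gsupp_def\<close>)
    qed
  qed simp
  have part2: "M_natural M {n. gen_eval k (gps_comp P G) m n \<noteq> 0}"
    if Mnat: "M_natural M {n. F n \<noteq> 0}" and coin: "coinitial_seq M (\<lambda>\<nu>. l ^ \<nu>)"
  proof -
    have Fl: "F l \<noteq> 0" and Fle: "\<And>n. F n \<noteq> 0 \<Longrightarrow> gle n l" using lm(1) unfolding is_lm_def by auto
    have Fpos: "gpos x" if Fx: "F x \<noteq> 0" for x
    proof -
      obtain \<alpha> where "\<alpha> \<in> {\<alpha>. G \<alpha> \<noteq> 0 \<and> mono_pow k m \<alpha> = x}"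
        using Fx unfolding G(3) gen_eval_def by (rule sum.not_neutral_contains_not_neutral) blast
      then show ?thesis using gpos_mono_pow[of k m \<alpha>] m_pos by auto
    qed
    have lb: "gb01 l" using gb01_small[OF Fpos[OF Fl] lm(2)] .
    have Fb: "gb01 x" if "F x \<noteq> 0" for x using gb01_le[OF Fpos[OF that] Fle[OF that] lb] .
    have G0: "G (\<lambda>_. 0) = 0"
    proof (rule ccontr)
      assume nz: "G (\<lambda>_. 0) \<noteq> 0"
      have z: "mono_pow k m (\<lambda>_. 0) = 1" by (rule mono_pow_zero) (rule m_pos)
      have "{\<alpha>. G \<alpha> \<noteq> 0 \<and> mono_pow k m \<alpha> = 1} = {\<lambda>_. 0}"
      proof (rule set_eqI, rule iffI)
        fix \<alpha> assume a: "\<alpha> \<in> {\<alpha>. G \<alpha> \<noteq> 0 \<and> mono_pow k m \<alpha> = 1}"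
        then have aW: "\<alpha> \<in> W" using GW by auto
        show "\<alpha> \<in> {\<lambda>_. 0}"
        proof (rule ccontr)
          assume "\<alpha> \<notin> {\<lambda>_. 0}"
          then have "(\<lambda>_. 0) \<noteq> \<alpha>" by auto
          moreover have "\<forall>i\<le>k. (0::real) \<le> \<alpha> i" using Wnn[OF aW] by auto
          moreover have "mono_pow k m (\<lambda>_. 0) = mono_pow k m \<alpha>" using a z by auto
          ultimately show False using no_rel[OF W0 aW] by auto
        qed
      next
        fix \<alpha> :: "nat \<Rightarrow> real" assume "\<alpha> \<in> {\<lambda>_. 0}"
        then show "\<alpha> \<in> {\<alpha>. G \<alpha> \<noteq> 0 \<and> mono_pow k m \<alpha> = 1}" using nz z by auto
      qed
      then have "F 1 = G (\<lambda>_. 0)" unfolding G(3) gen_eval_def by simp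
      then have "F 1 \<noteq> 0" using nz by simp
      then have "gle 1 l" using Fle by blast
      then show False using gsmall_gle_one lm(2) by blast
    qed
    obtain e :: real where e: "0 < e" and ord: "\<And>\<beta>. G \<beta> \<noteq> 0 \<Longrightarrow> e \<le> (\<Sum>i\<le>k. \<beta> i)"
    proof -
      have pos_coord: "\<exists>i\<le>k. 0 < \<beta> i" if "G \<beta> \<noteq> 0" for \<beta>
      proof (rule ccontr)
        assume "\<not> (\<exists>i\<le>k. 0 < \<beta> i)"
        then have "\<beta> = (\<lambda>_. 0)" using Gsupp[OF that] by (intro ext) (metis linorder_not_le order_antisym_conv)
        then show False using that G0 by simp
      qed
      have sum_ge: "\<beta> i \<le> (\<Sum>j\<le>k. \<beta> j)" if "G \<beta> \<noteq> 0" "i \<le> k" for \<beta> i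
        by (rule member_le_sum) (use Gsupp[OF that(1)] that(2) in auto)
      define U where "U = {x. \<exists>\<beta> i. G \<beta> \<noteq> 0 \<and> i \<le> k \<and> 0 < \<beta> i \<and> x = \<beta> i}"
      show ?thesis
      proof (cases "U = {}")
        case True
        have "G \<beta> = 0" for \<beta>
        proof (rule ccontr)
          assume "G \<beta> \<noteq> 0"
          then obtain i where "i \<le> k" "0 < \<beta> i" using pos_coord by blast
          then have "\<beta> i \<in> U" using \<open>G \<beta> \<noteq> 0\<close> unfolding U_def by blast
          then show False using True by simp
        qed
        then show ?thesis using that[of 1] by simp
      next
        case False
        then obtain u0 where u0: "u0 \<in> U" by auto
        define E where "E = U \<inter> {..u0}"
        have "E \<subseteq> (\<Union>i\<le>k. ((\<lambda>\<alpha>. \<alpha> i) ` W \<inter> {..<u0+1}))"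
          unfolding E_def U_def using GW by force
        then have fE: "finite E" by (rule finite_subset) (rule finite_UN_I, simp, rule Wdisc, simp)
        have u0E: "u0 \<in> E" using u0 unfolding E_def by auto
        have "Min E \<in> E" using Min_in[OF fE] u0E by auto
        then have Epos: "0 < Min E" unfolding E_def U_def by auto
        show ?thesis
        proof (rule that[OF Epos])
          fix \<beta> assume b: "G \<beta> \<noteq> 0"
          then obtain i where i: "i \<le> k" "0 < \<beta> i" using pos_coord by blast
          then have bU: "\<beta> i \<in> U" using b unfolding U_def by blast
          have "Min E \<le> \<beta> i"
          proof (cases "\<beta> i \<le> u0")
            case True then have "\<beta> i \<in> E" using bU E_def by auto
            then show ?thesis using fE by simp
          next
            case False
            have "Min E \<le> u0" using fE u0E by simp
            then show ?thesis using False by simp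
          qed
          also have "\<dots> \<le> (\<Sum>j\<le>k. \<beta> j)" using sum_ge[OF b i(1)] .
          finally show "Min E \<le> (\<Sum>j\<le>k. \<beta> j)" .
        qed
      qed
    qed
    show ?thesis
      unfolding M_natural_def
    proof
      fix a assume aM: "a \<in> M"
      obtain \<nu>0 where nu0: "gle (l ^ \<nu>0) a" using coin aM unfolding coinitial_seq_def by blast
      define Sa where "Sa = {x \<in> {n. F n \<noteq> 0}. gless a x}"
      have fSa: "finite Sa" using Mnat aM unfolding M_natural_def Sa_def by blast
      have "{n \<in> {n. gen_eval k (gps_comp P G) m n \<noteq> 0}. gless a n}
            \<subseteq> prod_list ` {ns. set ns \<subseteq> Sa \<and> length ns \<le> \<nu>0}"
      proof
        fix n assume n: "n \<in> {n \<in> {n. gen_eval k (gps_comp P G) m n \<noteq> 0}. gless a n}"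
        then obtain \<nu> where "gen_eval k (gps_pow G \<nu>) m n \<noteq> 0"
          using eval_comp_nz[OF GW ord e] by blast
        then obtain ns where ns: "length ns = \<nu>" "\<forall>x\<in>set ns. F x \<noteq> 0" "n = prod_list ns"
          using eval_pow_nz[OF GW] G(3) by blast
        have nsb: "\<forall>x\<in>set ns. gb01 x" using ns(2) Fb by blast
        have an: "gless a n" using n by simp
        have "set ns \<subseteq> Sa"
        proof
          fix x assume x: "x \<in> set ns"
          have "gle n x" using gle_prod_list[OF nsb x] ns(3) by simp
          then have "gless a x" using gless_gle_trans an by blast
          then show "x \<in> Sa" using ns(2) x unfolding Sa_def by auto
        qed
        moreover have "length ns \<le> \<nu>0"
        proof (rule ccontr)
          assume "\<not> length ns \<le> \<nu>0"
          then have "\<nu>0 \<le> length ns" by simp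
          have "gle n (l ^ length ns)" using gle_prod_list_pow[of ns l] ns(2,3) Fpos Fle gb01_gpos[OF lb]
            by auto
          also have "gle (l ^ length ns) (l ^ \<nu>0)" by (rule gle_power_mono[OF lb \<open>\<nu>0 \<le> length ns\<close>])
          then have "gle n (l ^ \<nu>0)" using calculation gle_trans by blast
          then have "gle n a" using nu0 gle_trans by blast
          then show False using gless_gle_False an by blast
        qed
        ultimately show "n \<in> prod_list ` {ns. set ns \<subseteq> Sa \<and> length ns \<le> \<nu>0}" using ns(3) by auto
      qed
      moreover have "finite (prod_list ` {ns. set ns \<subseteq> Sa \<and> length ns \<le> \<nu>0})"
        using finite_lists_length_le[OF fSa] by simp
      ultimately show "finite {n \<in> {n. gen_eval k (gps_comp P G) m n \<noteq> 0}. gless a n}"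
        using finite_subset by blast
    qed
  qed
  show ?thesis using part1 part2 by blast
qed

end
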